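(* Let $(\lambda_k),(x_k),(y_k)$ be generated by the acceleration framework (context) up to $K$ for convex differentiable $g$ with minimizer $x^*$, and suppose $\delta\le\frac{\|x^*\|}{\mu A_K}$ with $\mu=\frac{4\sqrt2}{\sqrt{1-\sigma}}$. Then for all $k\in[K]$ and $\theta\in[0,1]$: $\|y_k-x^*\|\le\mu\|x^*\|$ and $\|(1-\theta)x_k+\theta y_k-x^*\|\le\mu\|x^*\|$.
   Context: Acceleration framework: let $g:\mathbb{R}^d\to\mathbb{R}$ be convex and differentiable, $\sigma\in(0,1)$, $\delta\ge0$, $K\ge1$. Sequences $(\lambda_k)_{k=1}^K\subset(0,\infty)$ and $(x_k)_{k=0}^K,(y_k)_{k=0}^K\subset\mathbb{R}^d$ are generated by the framework if $x_0=y_0=0$, $A_0=0$, and for each $k=0,\dots,K-1$, with $a_{k+1}=\frac12\big[\lambda_{k+1}+\sqrt{\lambda_{k+1}^2+4\lambda_{k+1}A_k}\big]$, $A_{k+1}=A_k+a_{k+1}$, $\tilde x_k=\frac{A_k}{A_{k+1}}y_k+\frac{a_{k+1}}{A_{k+1}}x_k$, one has $\|\lambda_{k+1}\nabla g(y_{k+1})+y_{k+1}-\tilde x_k\|\le\sigma\|y_{k+1}-\tilde x_k\|+\lambda_{k+1}\delta$ and $\|x_{k+1}-(x_k-a_{k+1}\nabla g(y_{k+1}))\|\le a_{k+1}\delta$. (Note $\lambda_{k+1}A_{k+1}=a_{k+1}^2$.) *)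

theory Defs
  imports "HOL-Analysis.Analysis"
begin

text \<open>Coefficients of the acceleration framework: A 0 = 0,
  a (k+1) = (lam(k+1) + sqrt(lam(k+1)^2 + 4 lam(k+1) A k)) / 2,  A (k+1) = A k + a (k+1).
  The value accel_a lam 0 is irrelevant (set to 0).\<close>

fun accel_A :: "(nat \<Rightarrow> real) \<Rightarrow> nat \<Rightarrow> real" where
  "accel_A lam 0 = 0"
| "accel_A lam (Suc k) = accel_A lam k
     + (lam (Suc k) + sqrt ((lam (Suc k))\<^sup>2 + 4 * lam (Suc k) * accel_A lam k)) / 2"

definition accel_a :: "(nat \<Rightarrow> real) \<Rightarrow> nat \<Rightarrow> real" where
  "accel_a lam k = (case k of 0 \<Rightarrow> 0
     | Suc j \<Rightarrow> (lam (Suc j) + sqrt ((lam (Suc j))\<^sup>2 + 4 * lam (Suc j) * accel_A lam j)) / 2)"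

definition accel_xtilde :: "(nat \<Rightarrow> real) \<Rightarrow> (nat \<Rightarrow> 'a::real_vector) \<Rightarrow> (nat \<Rightarrow> 'a) \<Rightarrow> nat \<Rightarrow> 'a" where
  "accel_xtilde lam x y k =
     (accel_A lam k / accel_A lam (Suc k)) *\<^sub>R y k + (accel_a lam (Suc k) / accel_A lam (Suc k)) *\<^sub>R x k"

definition accel_framework ::
  "('a::real_inner \<Rightarrow> 'a) \<Rightarrow> real \<Rightarrow> real \<Rightarrow> nat \<Rightarrow> (nat \<Rightarrow> real) \<Rightarrow> (nat \<Rightarrow> 'a) \<Rightarrow> (nat \<Rightarrow> 'a) \<Rightarrow> bool"
  where
  "accel_framework G \<sigma> \<delta> K lam x y \<longleftrightarrow>
     0 < \<sigma> \<and> \<sigma> < 1 \<and> 0 \<le> \<delta> \<and> 1 \<le> K \<and>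
     (\<forall>k\<in>{1..K}. 0 < lam k) \<and> x 0 = 0 \<and> y 0 = 0 \<and>
     (\<forall>k<K.
        norm (lam (Suc k) *\<^sub>R G (y (Suc k)) + y (Suc k) - accel_xtilde lam x y k)
          \<le> \<sigma> * norm (y (Suc k) - accel_xtilde lam x y k) + lam (Suc k) * \<delta>
      \<and> norm (x (Suc k) - (x k - accel_a lam (Suc k) *\<^sub>R G (y (Suc k))))
          \<le> accel_a lam (Suc k) * \<delta>)"

end

theory Submission
  imports Defs
begin

lemma grad_ineq:
  fixes g :: "'a::real_inner \<Rightarrow> real"
  assumes conv: "convex_on UNIV g"
    and grad: "\<And>z. (g has_derivative (\<lambda>h. G z \<bullet> h)) (at z)"
  shows "g c + G c \<bullet> (x - c) \<le> g x"
proof -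
  define \<phi> where "\<phi> t = g (c + t *\<^sub>R (x - c))" for t :: real
  have cphi: "convex_on UNIV \<phi>"
    unfolding \<phi>_def
  proof (rule convex_onI)
    fix u s t :: real assume "0 < u" "u < 1"
    have e: "c + ((1 - u) *\<^sub>R s + u *\<^sub>R t) *\<^sub>R (x - c) = (1-u) *\<^sub>R (c + s *\<^sub>R (x - c)) + u *\<^sub>R (c + t *\<^sub>R (x - c))"
      by (simp add: algebra_simps)
    show "g (c + ((1 - u) *\<^sub>R s + u *\<^sub>R t) *\<^sub>R (x - c)) \<le> (1 - u) * g (c + s *\<^sub>R (x - c)) + u * g (c + t *\<^sub>R (x - c))"
      unfolding e using conv \<open>0 < u\<close> \<open>u < 1\<close> by (simp add: convex_on_def)
  qed simp
  have d1: "((\<lambda>t::real. c + t *\<^sub>R (x - c)) has_derivative (\<lambda>t. t *\<^sub>R (x - c))) (at 0)"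
    by (auto intro!: derivative_eq_intros)
  have "(\<phi> has_derivative (\<lambda>t. G c \<bullet> (t *\<^sub>R (x - c)))) (at 0)"
    unfolding \<phi>_def using has_derivative_compose[OF d1, of g "\<lambda>h. G c \<bullet> h"] grad[of c] by simp
  hence "(\<phi> has_field_derivative (G c \<bullet> (x - c))) (at 0 within UNIV)"
    unfolding has_field_derivative_def by (simp add: mult.commute[of _ "G c \<bullet> (x - c)"])
  from convex_on_imp_above_tangent[OF cphi _ _ _ this, of 1] 
  have "\<phi> 1 - \<phi> 0 \<ge> G c \<bullet> (x - c)" by simp
  thus ?thesis unfolding \<phi>_def by simp
qed

lemma step:
  fixes x y x' y' u v xt :: "'a::real_inner" and gy gy' gs lam A A' a \<sigma> \<delta> V :: real
  assumes lam: "lam > 0" and A: "A \<ge> 0" and a: "a > 0" and A': "A' = A + a"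
    and aa: "a\<^sup>2 = lam * A'" and s0: "0 < \<sigma>" and s1: "\<sigma> < 1" and d0: "\<delta> \<ge> 0"
    and conv1: "gy' + v \<bullet> (u - y') \<le> gs"
    and conv2: "gy' + v \<bullet> (y - y') \<le> gy"
    and o1: "gs \<le> gy'"
    and xt: "xt = (A/A') *\<^sub>R y + (a/A') *\<^sub>R x"
    and c1: "norm (lam *\<^sub>R v + y' - xt) \<le> \<sigma> * norm (y' - xt) + lam * \<delta>"
    and c2: "norm (x' - (x - a *\<^sub>R v)) \<le> a * \<delta>"
    and V: "V \<ge> 0" and hV: "(norm (x - u))\<^sup>2 + 2 * A * (gy - gs) \<le> V\<^sup>2"
  shows "(norm (x' - u))\<^sup>2 + 2 * A' * (gy' - gs) + (1 - \<sigma>) * (A' / lam) * (norm (y' - xt))\<^sup>2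
           \<le> (V + 2 * a * \<delta> / sqrt (1 - \<sigma>))\<^sup>2"
proof -
  define d where "d = y' - xt"
  define r where "r = norm d"
  define h where "h = x - a *\<^sub>R v"
  define c where "c = 1 / sqrt (1 - \<sigma>)"
  have A'pos: "A' > 0" using A a A' by simp
  have cc: "c\<^sup>2 = 1 / (1 - \<sigma>)" using s1 by (simp add: c_def power_divide)
  have c1': "c \<ge> 1" using s0 s1 unfolding c_def by (simp add: real_sqrt_le_1_iff)
  have xtA: "A' *\<^sub>R xt = A *\<^sub>R y + a *\<^sub>R x" using A'pos unfolding xt by (simp add: scaleR_add_right)
  have comb: "A * (gy - gy') + a * (gs - gy') \<ge> A * (v \<bullet> (y - y')) + a * (v \<bullet> (u - y'))"
    using conv1 conv2 A a
    by (smt (verit, ccfv_SIG) mult_left_mono)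
  have lin: "A * (v \<bullet> (y - y')) + a * (v \<bullet> (u - y')) = A' * (v \<bullet> (xt - y')) + a * (v \<bullet> (u - x))"
  proof -
    have "A * (v \<bullet> (y - y')) + a * (v \<bullet> (u - y')) = v \<bullet> (A *\<^sub>R y + a *\<^sub>R x) + a * (v \<bullet> (u - x)) - A' * (v \<bullet> y')"
      by (simp add: A' inner_diff_right inner_add_right algebra_simps)
    also have "\<dots> = v \<bullet> (A' *\<^sub>R xt) + a * (v \<bullet> (u - x)) - A' * (v \<bullet> y')" by (simp add: xtA)
    also have "\<dots> = A' * (v \<bullet> (xt - y')) + a * (v \<bullet> (u - x))"
      by (simp add: inner_diff_right algebra_simps)
    finally show ?thesis .
  qed
  have hu: "(norm (h - u))\<^sup>2 = (norm (x - u))\<^sup>2 - 2 * a * (v \<bullet> (x - u)) + a\<^sup>2 * (norm v)\<^sup>2"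
  proof -
    have e: "h - u = (x - u) - a *\<^sub>R v" by (simp add: h_def algebra_simps)
    have g: "(norm (p - a *\<^sub>R v))\<^sup>2 = (norm p)\<^sup>2 - 2 * a * (v \<bullet> p) + a\<^sup>2 * (norm v)\<^sup>2" for p :: 'a
      unfolding power2_norm_eq_inner by (simp add: inner_diff_left inner_diff_right inner_commute algebra_simps power2_eq_square)
    show ?thesis unfolding e g ..
  qed
  have wn: "(norm (lam *\<^sub>R v + y' - xt))\<^sup>2 = lam\<^sup>2 * (norm v)\<^sup>2 + 2 * lam * (v \<bullet> d) + r\<^sup>2"
  proof -
    have "lam *\<^sub>R v + y' - xt = lam *\<^sub>R v + d" by (simp add: d_def)
    thus ?thesis unfolding r_def power2_norm_eq_inner by (simp add: inner_add_left inner_add_right algebra_simps power2_eq_square inner_commute)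
  qed
  define w2 where "w2 = (norm (lam *\<^sub>R v + y' - xt))\<^sup>2"
  have key: "(A'/lam) * (w2 - r\<^sup>2) = a\<^sup>2 * (norm v)\<^sup>2 + 2 * A' * (v \<bullet> d)"
    using lam unfolding w2_def wn aa by (simp add: field_simps power2_eq_square)
  have vd: "v \<bullet> (xt - y') = - (v \<bullet> d)" by (simp add: d_def inner_diff_right)
  have E1: "(norm (h - u))\<^sup>2 + 2 * A' * (gy' - gs) \<le> (norm (x - u))\<^sup>2 + 2 * A * (gy - gs) + (A'/lam) * (w2 - r\<^sup>2)"
  proof -
    have "v \<bullet> (u - x) = - (v \<bullet> (x - u))" by (simp add: inner_diff_right)
    with comb lin vd have i1: "a * (v \<bullet> (x - u)) \<ge> - (A' * (v \<bullet> d)) - A * (gy - gy') - a * (gs - gy')"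
      by simp
    have "- A * (gy - gy') - a * (gs - gy') = A' * (gy' - gs) - A * (gy - gs)"
      unfolding A' by (simp add: algebra_simps)
    with i1 have "a * (v \<bullet> (x - u)) \<ge> - A' * (v \<bullet> d) + A' * (gy' - gs) - A * (gy - gs)"
      by simp
    thus ?thesis unfolding hu key by linarith
  qed
  have wle: "sqrt w2 \<le> \<sigma> * r + lam * \<delta>" using c1 unfolding w2_def r_def d_def by simp
  have w2le: "w2 \<le> (\<sigma> * r + lam * \<delta>)\<^sup>2"
  proof -
    have "w2 = (sqrt w2)\<^sup>2" unfolding w2_def by simp
    also have "\<dots> \<le> (\<sigma> * r + lam * \<delta>)\<^sup>2" using wle by (intro power_mono) (auto simp: w2_def)
    finally show ?thesis .
  qed
  have sq: "(\<sigma> * r + lam * \<delta>)\<^sup>2 \<le> \<sigma> * r\<^sup>2 + (lam * \<delta>)\<^sup>2 / (1 - \<sigma>)"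
  proof -
    have "\<sigma> * r\<^sup>2 + (lam * \<delta>)\<^sup>2 / (1 - \<sigma>) - (\<sigma> * r + lam * \<delta>)\<^sup>2 = \<sigma> / (1 - \<sigma>) * ((1 - \<sigma>) * r - lam * \<delta>)\<^sup>2"
      using s1 by (simp add: field_simps power2_eq_square)
    also have "\<dots> \<ge> 0" using s0 s1 by simp
    finally show ?thesis by simp
  qed
  have E2: "(A'/lam) * (w2 - r\<^sup>2) \<le> - ((1 - \<sigma>) * (A' / lam) * r\<^sup>2) + (a * \<delta> * c)\<^sup>2"
  proof -
    have "(A'/lam) * (w2 - r\<^sup>2) \<le> (A'/lam) * ((\<sigma> - 1) * r\<^sup>2 + (lam * \<delta>)\<^sup>2 / (1 - \<sigma>))"
      using w2le sq lam A'pos by (intro mult_left_mono) (auto simp: algebra_simps)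
    also have "\<dots> = - ((1 - \<sigma>) * (A' / lam) * r\<^sup>2) + (a * \<delta> * c)\<^sup>2"
      using lam s1 unfolding power_mult_distrib cc aa by (simp add: field_simps power2_eq_square)
    finally show ?thesis .
  qed
  define q where "q = norm (h - u)"
  define Q where "Q = 2 * A' * (gy' - gs) + (1 - \<sigma>) * (A' / lam) * r\<^sup>2"
  have Q0: "Q \<ge> 0" unfolding Q_def using o1 A'pos lam s1 by (intro add_nonneg_nonneg mult_nonneg_nonneg) auto
  have qQ: "q\<^sup>2 + Q \<le> (V + a * \<delta> * c)\<^sup>2"
  proof -
    have "q\<^sup>2 + Q \<le> V\<^sup>2 + (a * \<delta> * c)\<^sup>2" using E1 E2 hV unfolding q_def Q_def by linarith
    also have "\<dots> \<le> (V + a * \<delta> * c)\<^sup>2" using V a d0 c1' by (simp add: power2_sum)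
    finally show ?thesis .
  qed
  have qle: "q \<le> V + a * \<delta> * c"
    using qQ Q0 V a d0 c1' by (smt (verit) abs_le_square_iff abs_of_nonneg mult_nonneg_nonneg norm_ge_zero q_def)
  have xu: "norm (x' - u) \<le> q + a * \<delta>"
  proof -
    have "x' - u = (x' - h) + (h - u)" by simp
    hence "norm (x' - u) \<le> norm (x' - h) + norm (h - u)" by (metis norm_triangle_ineq)
    thus ?thesis using c2 unfolding q_def h_def by simp
  qed
  have "(norm (x' - u))\<^sup>2 + Q \<le> (q + a * \<delta>)\<^sup>2 + Q"
    using xu by (simp add: power_mono)
  also have "\<dots> \<le> (V + a * \<delta> * c + a * \<delta>)\<^sup>2"
  proof -
    have "(q + a * \<delta>)\<^sup>2 + Q = q\<^sup>2 + Q + 2 * q * (a * \<delta>) + (a * \<delta>)\<^sup>2" by (simp add: power2_sum)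
    also have "\<dots> \<le> (V + a * \<delta> * c)\<^sup>2 + 2 * (V + a * \<delta> * c) * (a * \<delta>) + (a * \<delta>)\<^sup>2"
      using qQ qle a d0 by (smt (verit) mult_right_mono zero_le_mult_iff)
    also have "\<dots> = (V + a * \<delta> * c + a * \<delta>)\<^sup>2" by (simp add: power2_sum)
    finally show ?thesis .
  qed
  also have "\<dots> \<le> (V + 2 * a * \<delta> * c)\<^sup>2"
  proof (intro power_mono)
    have "\<delta> \<le> \<delta> * c" using d0 c1' by (simp add: mult_le_cancel_left1)
    hence "a * \<delta> \<le> a * \<delta> * c" using a by (simp add: mult.assoc)
    thus "V + a * \<delta> * c + a * \<delta> \<le> V + 2 * a * \<delta> * c" by linarith
    show "0 \<le> V + a * \<delta> * c + a * \<delta>" using V a d0 c1' by simp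
  qed
  finally show ?thesis unfolding Q_def r_def d_def c_def by (simp add: algebra_simps)
qed

lemma A_facts:
  assumes lp: "\<forall>k\<in>{1..K}. 0 < lam k"
  shows "k \<le> K \<Longrightarrow> accel_A lam k \<ge> 0"
proof (induction k)
  case 0 then show ?case by simp
next
  case (Suc k)
  then have "lam (Suc k) > 0" using lp by auto
  with Suc show ?case by simp
qed

lemma a_facts:
  assumes lp: "\<forall>k\<in>{1..K}. 0 < lam k" and k: "k < K"
  shows "accel_a lam (Suc k) > 0"
    "accel_A lam (Suc k) = accel_A lam k + accel_a lam (Suc k)"
    "(accel_a lam (Suc k))\<^sup>2 = lam (Suc k) * accel_A lam (Suc k)"
proof -
  have A0: "accel_A lam k \<ge> 0" using A_facts[OF lp] k by simp
  have l: "lam (Suc k) > 0" using lp k by auto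
  define s where "s = sqrt ((lam (Suc k))\<^sup>2 + 4 * lam (Suc k) * accel_A lam k)"
  have s0: "s \<ge> 0" unfolding s_def using A0 l by simp
  have ss: "s\<^sup>2 = (lam (Suc k))\<^sup>2 + 4 * lam (Suc k) * accel_A lam k"
    unfolding s_def using A0 l by simp
  have ad: "accel_a lam (Suc k) = (lam (Suc k) + s) / 2" by (simp add: accel_a_def s_def)
  show "accel_a lam (Suc k) > 0" using ad s0 l by simp
  show e: "accel_A lam (Suc k) = accel_A lam k + accel_a lam (Suc k)" by (simp add: ad s_def)
  show "(accel_a lam (Suc k))\<^sup>2 = lam (Suc k) * accel_A lam (Suc k)"
    unfolding e ad using ss by (simp add: field_simps power2_eq_square)
qed

lemma A_mono:
  assumes lp: "\<forall>k\<in>{1..K}. 0 < lam k"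
  shows "k \<le> K \<Longrightarrow> accel_A lam k \<le> accel_A lam K"
proof (induction "K - k" arbitrary: k)
  case 0 then show ?case by simp
next
  case (Suc n)
  then have "k < K" by simp
  from a_facts[OF lp this] have "accel_A lam k \<le> accel_A lam (Suc k)" by simp
  moreover have "accel_A lam (Suc k) \<le> accel_A lam K"
    using Suc(1)[of "Suc k"] Suc(2) \<open>k < K\<close> by (simp del: accel_A.simps)
  ultimately show ?case by (rule order_trans)
qed

theorem mainTheorem14:
  fixes g :: "'a::euclidean_space \<Rightarrow> real" and G :: "'a \<Rightarrow> 'a"
    and \<sigma> \<delta> :: real and K :: nat and lam :: "nat \<Rightarrow> real"
    and x y :: "nat \<Rightarrow> 'a" and xs :: 'a
  assumes conv: "convex_on UNIV g"
    and grad: "\<And>z. (g has_derivative (\<lambda>h. G z \<bullet> h)) (at z)"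
    and fw: "accel_framework G \<sigma> \<delta> K lam x y"
    and opt: "\<And>z. g xs \<le> g z"
    and delta: "\<delta> \<le> norm xs / ((4 * sqrt 2 / sqrt (1 - \<sigma>)) * accel_A lam K)"
  shows "\<forall>k\<in>{1..K}. \<forall>\<theta>\<in>{0..1::real}.
           norm (y k - xs) \<le> (4 * sqrt 2 / sqrt (1 - \<sigma>)) * norm xs \<and>
           norm ((1 - \<theta>) *\<^sub>R x k + \<theta> *\<^sub>R y k - xs) \<le> (4 * sqrt 2 / sqrt (1 - \<sigma>)) * norm xs"
proof -
  from fw have s0: "0 < \<sigma>" and s1: "\<sigma> < 1" and d0: "0 \<le> \<delta>" and K1: "1 \<le> K"
    and lp: "\<forall>k\<in>{1..K}. 0 < lam k" and x0: "x 0 = 0" and y0: "y 0 = 0"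
    and cond: "\<And>k. k < K \<Longrightarrow>
        norm (lam (Suc k) *\<^sub>R G (y (Suc k)) + y (Suc k) - accel_xtilde lam x y k)
          \<le> \<sigma> * norm (y (Suc k) - accel_xtilde lam x y k) + lam (Suc k) * \<delta>
      \<and> norm (x (Suc k) - (x k - accel_a lam (Suc k) *\<^sub>R G (y (Suc k))))
          \<le> accel_a lam (Suc k) * \<delta>"
    unfolding accel_framework_def by auto
  define c where "c = 1 / sqrt (1 - \<sigma>)"
  have c1: "c \<ge> 1" using s0 s1 unfolding c_def by (simp add: real_sqrt_le_1_iff)
  have cc: "c\<^sup>2 = 1 / (1 - \<sigma>)" using s1 by (simp add: c_def power_divide)
  have mu: "4 * sqrt 2 / sqrt (1 - \<sigma>) = 4 * sqrt 2 * c" by (simp add: c_def)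
  have AKpos: "accel_A lam K > 0"
  proof -
    obtain j where j: "K = Suc j" using K1 by (cases K) auto
    from a_facts[OF lp, of j] A_facts[OF lp, of j] j show ?thesis by simp
  qed
  define B where "B = norm xs + 2 * accel_A lam K * \<delta> * c"
  have B0: "B \<ge> 0" unfolding B_def using AKpos d0 c1 by simp
  have Bb: "B \<le> 2 * norm xs"
  proof -
    have "\<delta> * (4 * sqrt 2 * c * accel_A lam K) \<le> norm xs"
      using delta AKpos c1 unfolding mu by (simp add: pos_le_divide_eq)
    moreover have "2 * accel_A lam K * \<delta> * c \<le> \<delta> * (4 * sqrt 2 * c * accel_A lam K)"
    proof -
      have "1 \<le> sqrt (2::real)" by simp
      hence "2 \<le> 4 * sqrt (2::real)" by linarith
      hence "2 * (accel_A lam K * \<delta> * c) \<le> (4 * sqrt 2) * (accel_A lam K * \<delta> * c)"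
        using AKpos d0 c1 by (intro mult_right_mono) auto
      thus ?thesis by (simp add: algebra_simps)
    qed
    ultimately show ?thesis unfolding B_def by linarith
  qed
  have gi: "\<And>p q. g p + G p \<bullet> (q - p) \<le> g q" using grad_ineq[OF conv grad] .
  have main: "k \<le> K \<Longrightarrow> (norm (x k - xs))\<^sup>2 + 2 * accel_A lam k * (g (y k) - g xs)
                 \<le> (norm xs + 2 * accel_A lam k * \<delta> * c)\<^sup>2 \<and> norm (y k - xs) \<le> 2 * B * c" for k
  proof (induction k)
    case 0
    have "norm xs \<le> 2 * B * c" using B0 c1 unfolding B_def using AKpos d0
      by (smt (verit, best) mult_le_cancel_left1 mult_nonneg_nonneg)
    then show ?case using x0 y0 by simp
  next
    case (Suc k)
    then have kK: "k < K" by simp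
    have IH1: "(norm (x k - xs))\<^sup>2 + 2 * accel_A lam k * (g (y k) - g xs) \<le> (norm xs + 2 * accel_A lam k * \<delta> * c)\<^sup>2"
      and IH2: "norm (y k - xs) \<le> 2 * B * c" using Suc by auto
    define A where "A = accel_A lam k"
    define A' where "A' = accel_A lam (Suc k)"
    define a where "a = accel_a lam (Suc k)"
    define l where "l = lam (Suc k)"
    define xt where "xt = accel_xtilde lam x y k"
    have A0: "A \<ge> 0" unfolding A_def using A_facts[OF lp] kK by simp
    have a0: "a > 0" and A'e: "A' = A + a" and aa: "a\<^sup>2 = l * A'"
      using a_facts[OF lp kK] unfolding a_def A_def A'_def l_def by auto
    have l0: "l > 0" using lp kK unfolding l_def by auto
    have A'pos: "A' > 0" using A0 a0 A'e by simp
    have A'K: "A' \<le> accel_A lam K" unfolding A'_def using A_mono[OF lp, of "Suc k"] kK by (simp del: accel_A.simps)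
    have xtd: "xt = (A/A') *\<^sub>R y k + (a/A') *\<^sub>R x k"
      unfolding xt_def accel_xtilde_def A_def A'_def a_def ..
    have V0: "norm xs + 2 * A * \<delta> * c \<ge> 0" using A0 d0 c1 by simp
    have hV: "(norm (x k - xs))\<^sup>2 + 2 * A * (g (y k) - g xs) \<le> (norm xs + 2 * A * \<delta> * c)\<^sup>2"
      using IH1 unfolding A_def .
    have st: "(norm (x (Suc k) - xs))\<^sup>2 + 2 * A' * (g (y (Suc k)) - g xs) + (1 - \<sigma>) * (A' / l) * (norm (y (Suc k) - xt))\<^sup>2
           \<le> (norm xs + 2 * A * \<delta> * c + 2 * a * \<delta> / sqrt (1 - \<sigma>))\<^sup>2"
      apply (rule step[OF l0 A0 a0 A'e aa s0 s1 d0 gi gi opt xtd _ _ V0 hV])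
      using cond[OF kK] unfolding l_def a_def xt_def by auto
    have eqV: "norm xs + 2 * A * \<delta> * c + 2 * a * \<delta> / sqrt (1 - \<sigma>) = norm xs + 2 * A' * \<delta> * c"
      unfolding A'e c_def by (simp add: algebra_simps)
    define R where "R = (1 - \<sigma>) * (A' / l) * (norm (y (Suc k) - xt))\<^sup>2"
    have R0: "R \<ge> 0" unfolding R_def using s1 A'pos l0 by simp
    have E0: "2 * A' * (g (y (Suc k)) - g xs) \<ge> 0" using A'pos opt by simp
    have P1: "(norm (x (Suc k) - xs))\<^sup>2 + 2 * accel_A lam (Suc k) * (g (y (Suc k)) - g xs)
         \<le> (norm xs + 2 * accel_A lam (Suc k) * \<delta> * c)\<^sup>2"
      using st R0 unfolding eqV R_def A'_def by linarith
    have Vle: "norm xs + 2 * A' * \<delta> * c \<le> B"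
    proof -
      have "A' * (\<delta> * c) \<le> accel_A lam K * (\<delta> * c)" using A'K d0 c1 by (intro mult_right_mono) auto
      thus ?thesis unfolding B_def by (simp add: mult.assoc)
    qed
    have V'0: "norm xs + 2 * A' * \<delta> * c \<ge> 0" using A'pos d0 c1 by simp
    have RB: "R \<le> B\<^sup>2"
    proof -
      have "R \<le> (norm xs + 2 * A' * \<delta> * c)\<^sup>2" using st E0 unfolding eqV R_def
        by (smt (verit) zero_le_power2)
      also have "\<dots> \<le> B\<^sup>2" using Vle V'0 by (intro power_mono) auto
      finally show ?thesis .
    qed
    define r where "r = norm (y (Suc k) - xt)"
    have r0: "r \<ge> 0" unfolding r_def by simp
    have rle: "r \<le> B * c * a / A'"
    proof -
      have "R = r\<^sup>2 / (c\<^sup>2 * (a / A')\<^sup>2)"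
      proof -
        have lv: "l = a\<^sup>2 / A'" using aa A'pos by (simp add: field_simps)
        show ?thesis unfolding R_def r_def cc lv using s1 A'pos a0
          by (simp add: field_simps power2_eq_square)
      qed
      with RB have "r\<^sup>2 \<le> B\<^sup>2 * (c\<^sup>2 * (a / A')\<^sup>2)"
        using c1 a0 A'pos by (simp add: divide_le_eq mult.commute)
      also have "\<dots> = (B * c * a / A')\<^sup>2" by (simp add: power_mult_distrib power_divide)
      finally have "r\<^sup>2 \<le> (B * c * a / A')\<^sup>2" .
      moreover have "0 \<le> B * c * a / A'" using B0 c1 a0 A'pos by simp
      ultimately show ?thesis by (rule power2_le_imp_le)
    qed
    have xkB: "norm (x k - xs) \<le> B"
    proof -
      have E0': "2 * A * (g (y k) - g xs) \<ge> 0" using A0 opt by simp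
      have "(norm (x k - xs))\<^sup>2 \<le> B\<^sup>2"
      proof -
        have "(norm (x k - xs))\<^sup>2 \<le> (norm xs + 2 * A * \<delta> * c)\<^sup>2" using hV E0' by linarith
        also have "\<dots> \<le> B\<^sup>2"
        proof (rule power_mono)
          have "A \<le> accel_A lam K" using A_mono[OF lp, of k] kK unfolding A_def by simp
          hence "A * (\<delta> * c) \<le> accel_A lam K * (\<delta> * c)" using d0 c1 by (intro mult_right_mono) auto
          thus "norm xs + 2 * A * \<delta> * c \<le> B" unfolding B_def by (simp add: mult.assoc)
          show "0 \<le> norm xs + 2 * A * \<delta> * c" using A0 d0 c1 by simp
        qed
        finally show ?thesis .
      qed
      thus ?thesis using B0 by (rule power2_le_imp_le)
    qed
    have ydec: "y (Suc k) - xs = (A/A') *\<^sub>R (y k - xs) + (a/A') *\<^sub>R (x k - xs) + (y (Suc k) - xt)"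
    proof -
      have "(A/A') + (a/A') = 1" using A'e A'pos by (simp add: add_divide_distrib[symmetric])
      hence "xs = (A/A') *\<^sub>R xs + (a/A') *\<^sub>R xs" by (metis scaleR_add_left scaleR_one)
      thus ?thesis unfolding xtd by (simp add: algebra_simps)
    qed
    have "norm (y (Suc k) - xs) \<le> (A/A') * norm (y k - xs) + (a/A') * norm (x k - xs) + r"
    proof -
      have "norm (y (Suc k) - xs) \<le> norm ((A/A') *\<^sub>R (y k - xs)) + norm ((a/A') *\<^sub>R (x k - xs)) + norm (y (Suc k) - xt)"
        unfolding ydec by (meson norm_triangle_le norm_triangle_ineq add_mono order_refl)
      thus ?thesis using A0 a0 A'pos unfolding r_def by simp
    qed
    also have "\<dots> \<le> (A/A') * (2 * B * c) + (a/A') * B + B * c * a / A'"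
      using IH2 xkB rle A0 a0 A'pos by (intro add_mono mult_left_mono) auto
    also have "\<dots> \<le> (A/A') * (2 * B * c) + (a/A') * (2 * B * c)"
    proof -
      have "B \<le> B * c" using B0 c1 by (simp add: mult_le_cancel_left1)
      hence "(a/A') * B \<le> (a/A') * (B * c)" using a0 A'pos by (intro mult_left_mono) auto
      moreover have "(a/A') * (2 * B * c) = (a/A') * (B * c) + B * c * a / A'"
        using A'pos by (simp add: field_simps)
      ultimately have "(a/A') * B + B * c * a / A' \<le> (a/A') * (2 * B * c)"
        by linarith
      thus ?thesis by linarith
    qed
    also have "\<dots> = ((A + a)/A') * (2 * B * c)" by (simp add: add_divide_distrib algebra_simps)
    also have "\<dots> = 2 * B * c" using A'e A'pos by simp
    finally show ?case using P1 by simp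
  qed
  have fin: "2 * B * c \<le> (4 * sqrt 2 / sqrt (1 - \<sigma>)) * norm xs"
  proof -
    have "2 * B * c \<le> 4 * norm xs * c" using Bb c1 by simp
    also have "\<dots> \<le> 4 * sqrt 2 * c * norm xs"
    proof -
      have "1 * (4 * c * norm xs) \<le> sqrt 2 * (4 * c * norm xs)" using c1 by (intro mult_right_mono) auto
      thus ?thesis by (simp add: algebra_simps)
    qed
    finally show ?thesis unfolding mu by (simp add: algebra_simps)
  qed
  show ?thesis
  proof (intro ballI conjI)
    fix k \<theta> assume k: "k \<in> {1..K}" and th: "\<theta> \<in> {0..1::real}"
    have kK: "k \<le> K" using k by simp
    from main[OF kK] have yk: "norm (y k - xs) \<le> 2 * B * c"
      and h1: "(norm (x k - xs))\<^sup>2 + 2 * accel_A lam k * (g (y k) - g xs) \<le> (norm xs + 2 * accel_A lam k * \<delta> * c)\<^sup>2"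
      by auto
    have xkB: "norm (x k - xs) \<le> B"
    proof -
      have E0': "2 * accel_A lam k * (g (y k) - g xs) \<ge> 0" using A_facts[OF lp kK] opt by simp
      have "(norm (x k - xs))\<^sup>2 \<le> B\<^sup>2"
      proof -
        have "(norm (x k - xs))\<^sup>2 \<le> (norm xs + 2 * accel_A lam k * \<delta> * c)\<^sup>2" using h1 E0' by linarith
        also have "\<dots> \<le> B\<^sup>2"
        proof (rule power_mono)
          have "accel_A lam k * (\<delta> * c) \<le> accel_A lam K * (\<delta> * c)"
            using A_mono[OF lp kK] d0 c1 by (intro mult_right_mono) auto
          thus "norm xs + 2 * accel_A lam k * \<delta> * c \<le> B" unfolding B_def by (simp add: mult.assoc)
          show "0 \<le> norm xs + 2 * accel_A lam k * \<delta> * c" using A_facts[OF lp kK] d0 c1 by simp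
        qed
        finally show ?thesis .
      qed
      thus ?thesis using B0 by (rule power2_le_imp_le)
    qed
    show "norm (y k - xs) \<le> (4 * sqrt 2 / sqrt (1 - \<sigma>)) * norm xs" using yk fin by linarith
    have t0: "0 \<le> \<theta>" and t1: "\<theta> \<le> 1" using th by auto
    have "(1 - \<theta>) *\<^sub>R x k + \<theta> *\<^sub>R y k - xs = (1 - \<theta>) *\<^sub>R (x k - xs) + \<theta> *\<^sub>R (y k - xs)"
      by (simp add: algebra_simps)
    hence "norm ((1 - \<theta>) *\<^sub>R x k + \<theta> *\<^sub>R y k - xs) \<le> (1 - \<theta>) * norm (x k - xs) + \<theta> * norm (y k - xs)"
      using t0 t1 by (metis (no_types, lifting) abs_of_nonneg diff_ge_0_iff_ge norm_scaleR norm_triangle_ineq)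
    also have "\<dots> \<le> (1 - \<theta>) * (2 * B * c) + \<theta> * (2 * B * c)"
    proof -
      have "B \<le> 2 * B * c" using B0 c1 by (smt (verit) mult_le_cancel_left1 mult_nonneg_nonneg)
      thus ?thesis using xkB yk t0 t1 by (intro add_mono mult_left_mono) auto
    qed
    also have "\<dots> = 2 * B * c" by (simp add: algebra_simps)
    finally show "norm ((1 - \<theta>) *\<^sub>R x k + \<theta> *\<^sub>R y k - xs) \<le> (4 * sqrt 2 / sqrt (1 - \<sigma>)) * norm xs"
      using fin by linarith
  qed
qed

end
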